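(* Consider the full-information matching model described in the context. The aggressive capacity reservation (ACR) policy $\pi^{\mathrm{ACR}}$ achieves the highest long-run throughput among all policies in the admissible class $\Pi$, i.e. $\mathrm{TP}(\pi^{\mathrm{ACR}}) = \sup_{\pi\in\Pi}\mathrm{TP}(\pi)$.
   Context: Job/agent types are $\mathcal{L}=\{0,1,\dots,\ell\}$. Agents of type $i$ arrive according to a Poisson process of rate $\lambda_i>0$ and jobs of type $j$ according to a Poisson process of rate $\mu_j>0$, all processes independent. A type $0$ ("flexible") agent can fulfill jobs of every type; a type $i\ge 1$ ("specialized") agent can fulfill only type $i$ jobs. A job that is not matched at its arrival instant is lost. Each waiting agent has an independent exponential patience with rate $\theta>0$ and abandons when it expires; a matched agent leaves. The state is $A=(A_0,\dots,A_\ell)\in\mathbb{Z}_{\ge0}^{\ell+1}$, the numbers of waiting agents of each type. A policy is a map $\pi:\mathbb{Z}_{\ge0}^{\ell+1}\times\mathcal{L}\to[0,1]^{\ell+2}$, where $\pi_i(A,j)$ ($i\in\{0,\dots,\ell\}$) is the probability an arriving type $j$ job is assigned to a (uniformly random) waiting agent of type $i$ and $\pi_{-1}(A,j)$ the probability the job is rejected; the admissible class $\Pi$ consists of those $\pi$ with $\sum_{i\in\{-1,0,\dots,\ell\}}\pi_i(A,j)=1$, $\pi_i(A,j)=0$ whenever $A_i=0$, and $\pi_i(A,j)=0$ for $i\notin\{0,j\}$ (idling allowed). Let $M^\pi(T)$ be the number of matches in $[0,T]$ and $\mathrm{TP}(\pi)=\limsup_{T\to\infty}\frac1T\mathbb{E}[M^\pi(T)\mid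 A^{(0)}=A]$. The ACR policy assigns a type $j$ job to a type $j$ agent if one is present, otherwise to a type $0$ agent if one is present (otherwise the job is lost); in particular type $0$ jobs go to type $0$ agents. *)

theory Defs
  imports "HOL-Probability.Probability"
begin

(* Types are 0..l.  A state is a list A of length l+1, A!i = number of waiting
   type-i agents.  A policy pi A j i is the probability that an arriving type-j job
   is assigned to a type-i agent (i = 0..l) or rejected (i = -1). *)

type_synonym state = "nat list"
type_synonym policy = "nat list \<Rightarrow> nat \<Rightarrow> int \<Rightarrow> real"

definition admissible :: "nat \<Rightarrow> policy set" where
  "admissible l = {p. \<forall>A j. length A = Suc l \<longrightarrow> j \<le> l \<longrightarrow>
      (\<forall>i\<in>{- 1 .. int l}. 0 \<le> p A j i) \<and>
      (\<Sum>i\<in>{- 1 .. int l}. p A j i) = 1 \<and>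
      (\<forall>i\<le>l. A ! i = 0 \<longrightarrow> p A j (int i) = 0) \<and>
      (\<forall>i\<le>l. i \<noteq> 0 \<and> i \<noteq> j \<longrightarrow> p A j (int i) = 0)}"

definition acr :: policy where
  "acr A j i = (if 0 < A ! j then (if i = int j then 1 else 0)
                else if 0 < A ! 0 then (if i = 0 then 1 else 0)
                else (if i = -1 then 1 else 0))"

definition total_rate :: "nat \<Rightarrow> (nat \<Rightarrow> real) \<Rightarrow> (nat \<Rightarrow> real) \<Rightarrow> real \<Rightarrow> state \<Rightarrow> real" where
  "total_rate l lam mu \<theta> A = (\<Sum>i\<le>l. lam i) + (\<Sum>j\<le>l. mu j) + \<theta> * (\<Sum>i\<le>l. real (A ! i))"

(* list of possible events: (rate, next state, is the event a match?) *)
definition events :: "nat \<Rightarrow> (nat \<Rightarrow> real) \<Rightarrow> (nat \<Rightarrow> real) \<Rightarrow> real \<Rightarrow> policy \<Rightarrow> state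
    \<Rightarrow> (real \<times> state \<times> bool) list" where
  "events l lam mu \<theta> p A =
     [(lam i, A[i := A ! i + 1], False). i \<leftarrow> [0..<Suc l]]             \<comment> \<open>agent arrival\<close>
   @ [(\<theta> * real (A ! i), A[i := A ! i - 1], False). i \<leftarrow> [0..<Suc l]]  \<comment> \<open>abandonment\<close>
   @ [(mu j * p A j (int i), A[i := A ! i - 1], True). j \<leftarrow> [0..<Suc l], i \<leftarrow> [0..<Suc l]] \<comment> \<open>match\<close>
   @ [(mu j * p A j (-1), A, False). j \<leftarrow> [0..<Suc l]]"

definition jump_dist :: "nat \<Rightarrow> (nat \<Rightarrow> real) \<Rightarrow> (nat \<Rightarrow> real) \<Rightarrow> real \<Rightarrow> policy \<Rightarrow> state
    \<Rightarrow> (state \<times> bool) measure" where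
  "jump_dist l lam mu \<theta> p A = density (count_space UNIV)
     (\<lambda>x. ennreal (\<Sum>e\<leftarrow>events l lam mu \<theta> p A.
            if snd e = x then fst e / total_rate l lam mu \<theta> A else 0))"

(* measurable space of (current state, current time, was last jump a match) *)
definition SP :: "(state \<times> real \<times> bool) measure" where
  "SP = count_space UNIV \<Otimes>\<^sub>M (borel \<Otimes>\<^sub>M count_space UNIV)"

definition step_kernel :: "nat \<Rightarrow> (nat \<Rightarrow> real) \<Rightarrow> (nat \<Rightarrow> real) \<Rightarrow> real \<Rightarrow> policy
    \<Rightarrow> state \<times> real \<times> bool \<Rightarrow> (state \<times> real \<times> bool) measure" where
  "step_kernel l lam mu \<theta> p s = (case s of (A, t, _) \<Rightarrow>
     bind (density lborel (exponential_density (total_rate l lam mu \<theta> A))) (\<lambda>\<tau>.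
     bind (jump_dist l lam mu \<theta> p A) (\<lambda>(B, g). return SP (B, t + \<tau>, g))))"

primrec jump_law :: "nat \<Rightarrow> (nat \<Rightarrow> real) \<Rightarrow> (nat \<Rightarrow> real) \<Rightarrow> real \<Rightarrow> policy \<Rightarrow> state
    \<Rightarrow> nat \<Rightarrow> (state \<times> real \<times> bool) measure" where
  "jump_law l lam mu \<theta> p A0 0 = return SP (A0, 0, False)"
| "jump_law l lam mu \<theta> p A0 (Suc n) =
     bind (jump_law l lam mu \<theta> p A0 n) (step_kernel l lam mu \<theta> p)"

(* E[M^pi(T) | A(0) = A0]: expected number of jumps at times <= T that are matches *)
definition expected_matches :: "nat \<Rightarrow> (nat \<Rightarrow> real) \<Rightarrow> (nat \<Rightarrow> real) \<Rightarrow> real \<Rightarrow> policy \<Rightarrow> state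
    \<Rightarrow> real \<Rightarrow> ennreal" where
  "expected_matches l lam mu \<theta> p A0 T =
     (\<Sum>n. emeasure (jump_law l lam mu \<theta> p A0 (Suc n)) {(B, t, g). g \<and> t \<le> T})"

definition throughput :: "nat \<Rightarrow> (nat \<Rightarrow> real) \<Rightarrow> (nat \<Rightarrow> real) \<Rightarrow> real \<Rightarrow> policy \<Rightarrow> state \<Rightarrow> ennreal" where
  "throughput l lam mu \<theta> p A0 =
     Limsup at_top (\<lambda>T::real. expected_matches l lam mu \<theta> p A0 T / ennreal T)"

end

theory Submission
  imports Defs
begin

definition up :: "nat list \<Rightarrow> nat \<Rightarrow> nat list" where "up A i = A[i := A ! i + 1]"
definition dn :: "nat list \<Rightarrow> nat \<Rightarrow> nat list" where "dn A i = A[i := A ! i - 1]"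

lemma length_up[simp]: "length (up A i) = length A" by (simp add: up_def)
lemma length_dn[simp]: "length (dn A i) = length A" by (simp add: dn_def)

lemma sum_list_upt_atMost: "sum_list (map f [0..<Suc l]) = (\<Sum>i\<le>l. f i)"
proof -
  have "sum_list (map f [0..<Suc l]) = sum f (set [0..<Suc l])"
    by (rule sum_set_upt_conv_sum_list_nat[symmetric])
  also have "set [0..<Suc l] = {..l}" by auto
  finally show ?thesis .
qed

lemma sum_list_concat': "sum_list (concat xss) = sum_list (map sum_list (xss :: 'a::monoid_add list list))"
  by (induction xss) simp_all

lemma events_sum:
  fixes F :: "real \<Rightarrow> nat list \<times> bool \<Rightarrow> 'a::comm_monoid_add"
  shows "(\<Sum>e \<leftarrow> events l lam mu \<theta> p A. F (fst e) (snd e)) =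
    (\<Sum>i\<le>l. F (lam i) (up A i, False)) + (\<Sum>i\<le>l. F (\<theta> * real (A!i)) (dn A i, False))
    + (\<Sum>j\<le>l. \<Sum>i\<le>l. F (mu j * p A j (int i)) (dn A i, True))
    + (\<Sum>j\<le>l. F (mu j * p A j (-1)) (A, False))"
  unfolding events_def
  by (simp del: upt_Suc add: sum_list_concat' map_concat comp_def sum_list_upt_atMost up_def dn_def add.assoc)



lemma meas_fst_cs[measurable]: "(fst :: nat list \<times> bool \<Rightarrow> nat list) \<in> measurable (count_space UNIV) (count_space UNIV)"
  by simp
lemma meas_snd_cs[measurable]: "(snd :: nat list \<times> bool \<Rightarrow> bool) \<in> measurable (count_space UNIV) (count_space UNIV)"
  by simp

lemma bind_null:
  assumes ne: "space M \<noteq> {}"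
    and out: "\<And>x. x \<in> space M \<Longrightarrow> f x \<notin> space (subprob_algebra (f (SOME x. x \<in> space M)))"
  shows "emeasure (bind M f) X = 0"
proof -
  define S where "S = subprob_algebra (f (SOME x. x \<in> space M))"
  define D where "D = distr M S f"
  have D0: "emeasure D A = 0" for A
  proof -
    have pre: "f -` A \<inter> space M = {}" if "A \<in> sets S"
      using sets.sets_into_space[OF that] out unfolding S_def by blast
    have "emeasure D A = (if A \<in> sigma_sets (space S) (sets S) \<and>
        measure_space (space S) (sigma_sets (space S) (sets S)) (\<lambda>A. emeasure M (f -` A \<inter> space M))
        then emeasure M (f -` A \<inter> space M) else 0)"
      unfolding D_def distr_def by (rule emeasure_measure_of_conv[THEN fun_cong])
    also have "\<dots> = 0"
    proof (cases "A \<in> sigma_sets (space S) (sets S)")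
      case True
      then have "A \<in> sets S" by (simp only: sets.sigma_sets_eq)
      then show ?thesis using pre by simp
    qed simp
    finally show ?thesis .
  qed
  have AE: "AE x in D. False"
    by (rule AE_I'[of "space D"]) (auto simp: null_sets_def D0)
  have I0: "(\<integral>\<^sup>+ M'. emeasure M' B \<partial>D) = 0" for B
  proof -
    have "(\<integral>\<^sup>+ M'. emeasure M' B \<partial>D) = (\<integral>\<^sup>+ M'. 0 \<partial>D)"
      by (rule nn_integral_cong_AE, rule AE_mp[OF AE]) simp
    then show ?thesis by simp
  qed
  have "bind M f = join D" using ne by (simp only: bind_def D_def S_def if_False)
  moreover have "emeasure (join D) X = 0"
    unfolding join_def emeasure_measure_of_conv I0 by (simp only: if_cancel)
  ultimately show ?thesis by simp
qed

lemma ennreal_sum_list: "(\<And>x. x \<in> set xs \<Longrightarrow> 0 \<le> f x) \<Longrightarrow> ennreal (\<Sum>x\<leftarrow>xs. f x) = (\<Sum>x\<leftarrow>xs. ennreal (f x))"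
proof (induction xs)
  case (Cons a xs)
  have "0 \<le> (\<Sum>x\<leftarrow>xs. f x)" using Cons.prems by (intro sum_list_nonneg) auto
  then show ?case using Cons by (simp add: ennreal_plus)
qed simp

lemma nn_integral_count_list:
  fixes c :: "'b \<Rightarrow> ennreal" and es :: "('b \<times> 'a) list"
  shows "(\<integral>\<^sup>+x. (\<Sum>e\<leftarrow>es. c (fst e) * indicator {snd e} x) * f x \<partial>count_space UNIV) = (\<Sum>e\<leftarrow>es. c (fst e) * f (snd e))"
proof (induction es)
  case Nil then show ?case by simp
next
  case (Cons e es)
  have "(\<integral>\<^sup>+x. (\<Sum>e\<leftarrow>e # es. c (fst e) * indicator {snd e} x) * f x \<partial>count_space UNIV)
     = (\<integral>\<^sup>+x. (c (fst e) * f x) * indicator {snd e} x + (\<Sum>e\<leftarrow>es. c (fst e) * indicator {snd e} x) * f x \<partial>count_space UNIV)"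
    by (intro nn_integral_cong) (simp add: algebra_simps)
  also have "\<dots> = (\<integral>\<^sup>+x. (c (fst e) * f x) * indicator {snd e} x \<partial>count_space UNIV) + (\<integral>\<^sup>+x. (\<Sum>e\<leftarrow>es. c (fst e) * indicator {snd e} x) * f x \<partial>count_space UNIV)"
    by (rule nn_integral_add) simp_all
  also have "\<dots> = c (fst e) * f (snd e) + (\<Sum>e\<leftarrow>es. c (fst e) * f (snd e))"
    using Cons by simp
  finally show ?case by simp
qed

lemma sum_int_range: "(\<Sum>i\<in>{-1..int l}. f i) = f (-1) + (\<Sum>i\<le>l. f (int i))"
proof -
  have e: "{-1..int l} = insert (-1) (int ` {..l})"
  proof (rule set_eqI)
    fix x :: int
    show "x \<in> {-1..int l} \<longleftrightarrow> x \<in> insert (-1) (int ` {..l})"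
    proof
      assume "x \<in> {-1..int l}"
      then show "x \<in> insert (-1) (int ` {..l})"
        by (cases "x = -1") (auto simp: image_iff intro!: bexI[of _ "nat x"])
    qed auto
  qed
  have "(\<Sum>i\<in>int ` {..l}. f i) = (\<Sum>i\<le>l. f (int i))"
    by (rule sum.reindex_cong[of int]) (auto simp: inj_on_def)
  then show ?thesis unfolding e by (subst sum.insert) auto
qed

lemma nth_up: "up A i ! k = (if k = i \<and> i < length A then A ! i + 1 else A ! k)"
  by (cases "i < length A") (auto simp: up_def nth_list_update list_update_beyond)
lemma nth_dn: "dn A i ! k = (if k = i \<and> i < length A then A ! i - 1 else A ! k)"
  by (cases "i < length A") (auto simp: dn_def nth_list_update list_update_beyond)
lemma up_dn: "i < length A \<Longrightarrow> 0 < A ! i \<Longrightarrow> up (dn A i) i = A"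
  by (simp add: up_def dn_def list_update_same_conv)
lemma dn_up: "i < length A \<Longrightarrow> dn (up A i) i = A"
  by (simp add: up_def dn_def)
lemma dn_up_comm: "i < length A \<Longrightarrow> k < length A \<Longrightarrow> 0 < A ! k \<Longrightarrow> dn (up A i) k = up (dn A k) i"
  by (cases "i = k") (auto simp: up_def dn_def list_update_swap nth_list_update)
lemma up_up_comm: "up (up A i) k = up (up A k) i"
  by (cases "i = k") (auto simp: up_def list_update_swap nth_list_update)
lemma dn_dn_comm: "dn (dn A i) k = dn (dn A k) i"
  by (cases "i = k") (auto simp: dn_def list_update_swap nth_list_update)

lemma acr_adm: "acr \<in> admissible l"
  unfolding admissible_def
proof (rule CollectI, intro allI impI)
  fix A :: "nat list" and j assume A: "length A = Suc l" and j: "j \<le> l"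
  have 1: "\<forall>i\<in>{- 1..int l}. 0 \<le> acr A j i" by (auto simp: acr_def)
  have 2: "(\<Sum>i\<in>{- 1..int l}. acr A j i) = 1"
    unfolding sum_int_range using j by (auto simp: acr_def sum.delta)
  have 3: "\<forall>i\<le>l. A ! i = 0 \<longrightarrow> acr A j (int i) = 0" by (auto simp: acr_def)
  have 4: "\<forall>i\<le>l. i \<noteq> 0 \<and> i \<noteq> j \<longrightarrow> acr A j (int i) = 0" by (auto simp: acr_def)
  show "(\<forall>i\<in>{- 1..int l}. 0 \<le> acr A j i) \<and> (\<Sum>i\<in>{- 1..int l}. acr A j i) = 1 \<and>
        (\<forall>i\<le>l. A ! i = 0 \<longrightarrow> acr A j (int i) = 0) \<and> (\<forall>i\<le>l. i \<noteq> 0 \<and> i \<noteq> j \<longrightarrow> acr A j (int i) = 0)"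
    using 1 2 3 4 by blast
qed

definition Ek :: "real \<Rightarrow> real \<Rightarrow> real" where "Ek r \<tau> = (if 0 \<le> \<tau> then exp (- r * \<tau>) else 0)"

definition cT :: "real \<Rightarrow> real \<Rightarrow> ennreal" where "cT T u = (if u \<le> T then 1 else 0)"

lemma Ek_meas[measurable]: "(\<lambda>x. Ek a x) \<in> borel_measurable borel"
  unfolding Ek_def by measurable

lemma exp_int:
  assumes th: "0 < \<theta>" and w: "0 \<le> w"
  shows "(\<integral>\<^sup>+\<tau>. ennreal (\<theta> * exp (- \<theta> * \<tau>)) * indicator {0..w} \<tau> \<partial>lborel) = ennreal (1 - exp (- \<theta> * w))"
proof -
  have d: "((\<lambda>x. - exp (- \<theta> * x)) has_vector_derivative \<theta> * exp (- \<theta> * x)) (at x within {0..w})" for x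
  proof -
    have "((\<lambda>x. - exp (- \<theta> * x)) has_real_derivative \<theta> * exp (- \<theta> * x)) (at x within {0..w})"
      by (auto intro!: derivative_eq_intros)
    then show ?thesis by (simp add: has_real_derivative_iff_has_vector_derivative)
  qed
  have "((\<lambda>x. \<theta> * exp (- \<theta> * x)) has_integral (- exp (- \<theta> * w) - - exp (- \<theta> * 0))) {0..w}"
    by (rule fundamental_theorem_of_calculus[OF w d])
  then have hi: "((\<lambda>x. \<theta> * exp (- \<theta> * x)) has_integral (1 - exp (- \<theta> * w))) {0..w}" by simp
  show ?thesis
    by (rule nn_integral_has_integral_lebesgue'[OF _ hi]) (use th in simp)
qed

lemma shift_int:
  fixes g :: "real \<Rightarrow> ennreal"
  assumes g: "g \<in> borel_measurable borel"
  shows "(\<integral>\<^sup>+\<sigma>. g (\<tau> + \<sigma>) \<partial>lborel) = (\<integral>\<^sup>+w. g w \<partial>lborel)"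
proof -
  have "(\<integral>\<^sup>+w. g w \<partial>lborel) = (\<integral>\<^sup>+w. g w \<partial>distr lborel borel ((+) \<tau>))"
    by (simp add: lborel_distr_plus)
  also have "\<dots> = (\<integral>\<^sup>+\<sigma>. g (\<tau> + \<sigma>) \<partial>lborel)"
    by (rule nn_integral_distr) (simp_all add: g)
  finally show ?thesis ..
qed

lemma L3:
  fixes H :: "real \<Rightarrow> ennreal"
  assumes r: "0 < r" and th: "0 < \<theta>" and H[measurable]: "H \<in> borel_measurable borel"
  shows "(\<integral>\<^sup>+\<tau>. ennreal (Ek (r + \<theta>) \<tau>) * (H (t + \<tau>) + ennreal \<theta> * (\<integral>\<^sup>+\<sigma>. ennreal (Ek r \<sigma>) * H (t + \<tau> + \<sigma>) \<partial>lborel)) \<partial>lborel)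
       = (\<integral>\<^sup>+w. ennreal (Ek r w) * H (t + w) \<partial>lborel)"
proof -
  define f where "f \<tau> w = ennreal (Ek (r + \<theta>) \<tau>) * ennreal \<theta> * (ennreal (Ek r (w - \<tau>)) * H (t + w))" for \<tau> w
  have fm: "case_prod f \<in> borel_measurable (lborel \<Otimes>\<^sub>M lborel)" unfolding f_def by measurable
  have fm1: "(\<lambda>\<tau>. \<integral>\<^sup>+w. f \<tau> w \<partial>lborel) \<in> borel_measurable borel"
    using lborel.borel_measurable_nn_integral[OF fm] by simp
  have inner: "ennreal (Ek (r + \<theta>) \<tau>) * (ennreal \<theta> * (\<integral>\<^sup>+\<sigma>. ennreal (Ek r \<sigma>) * H (t + \<tau> + \<sigma>) \<partial>lborel)) = (\<integral>\<^sup>+w. f \<tau> w \<partial>lborel)" for \<tau>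
  proof -
    have gm: "(\<lambda>w. ennreal (Ek r (w - \<tau>)) * H (t + w)) \<in> borel_measurable borel" by measurable
    have "(\<integral>\<^sup>+\<sigma>. ennreal (Ek r \<sigma>) * H (t + \<tau> + \<sigma>) \<partial>lborel) = (\<integral>\<^sup>+w. ennreal (Ek r (w - \<tau>)) * H (t + w) \<partial>lborel)"
      using shift_int[OF gm, of \<tau>] by (simp add: add.assoc)
    moreover have "(\<integral>\<^sup>+w. f \<tau> w \<partial>lborel) = ennreal (Ek (r + \<theta>) \<tau>) * ennreal \<theta> * (\<integral>\<^sup>+w. ennreal (Ek r (w - \<tau>)) * H (t + w) \<partial>lborel)"
      unfolding f_def by (rule nn_integral_cmult) (use gm in simp)
    ultimately show ?thesis by (simp add: mult.assoc)
  qed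
  have "(\<integral>\<^sup>+\<tau>. ennreal (Ek (r + \<theta>) \<tau>) * (H (t + \<tau>) + ennreal \<theta> * (\<integral>\<^sup>+\<sigma>. ennreal (Ek r \<sigma>) * H (t + \<tau> + \<sigma>) \<partial>lborel)) \<partial>lborel)
      = (\<integral>\<^sup>+\<tau>. ennreal (Ek (r + \<theta>) \<tau>) * H (t + \<tau>) + (\<integral>\<^sup>+w. f \<tau> w \<partial>lborel) \<partial>lborel)"
    by (intro nn_integral_cong) (simp add: distrib_left inner)
  also have "\<dots> = (\<integral>\<^sup>+\<tau>. ennreal (Ek (r + \<theta>) \<tau>) * H (t + \<tau>) \<partial>lborel) + (\<integral>\<^sup>+\<tau>. (\<integral>\<^sup>+w. f \<tau> w \<partial>lborel) \<partial>lborel)"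
    by (rule nn_integral_add) (simp_all add: fm1)
  also have "(\<integral>\<^sup>+\<tau>. (\<integral>\<^sup>+w. f \<tau> w \<partial>lborel) \<partial>lborel) = (\<integral>\<^sup>+w. (\<integral>\<^sup>+\<tau>. f \<tau> w \<partial>lborel) \<partial>lborel)"
    by (rule lborel_pair.Fubini'[OF fm, symmetric])
  also have "\<dots> = (\<integral>\<^sup>+w. ennreal (Ek r w * (1 - exp (- \<theta> * w))) * H (t + w) \<partial>lborel)"
  proof (rule nn_integral_cong)
    fix w :: real
    have pt: "f \<tau> w = (ennreal (exp (- r * w)) * H (t + w)) * (ennreal (\<theta> * exp (- \<theta> * \<tau>)) * indicator {0..w} \<tau>)" for \<tau>
    proof (cases "0 \<le> \<tau> \<and> \<tau> \<le> w")
      case True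
      have "exp (- (r + \<theta>) * \<tau>) * \<theta> * exp (- r * (w - \<tau>)) = exp (- r * w) * (\<theta> * exp (- \<theta> * \<tau>))"
        by (simp add: mult_ac exp_add[symmetric] algebra_simps)
      then show ?thesis using True th
        by (simp add: f_def Ek_def ennreal_mult'[symmetric] ennreal_mult''[symmetric] mult_ac)
    next
      case False
      then show ?thesis by (auto simp: f_def Ek_def)
    qed
    show "(\<integral>\<^sup>+\<tau>. f \<tau> w \<partial>lborel) = ennreal (Ek r w * (1 - exp (- \<theta> * w))) * H (t + w)"
    proof (cases "0 \<le> w")
      case True
      have "(\<integral>\<^sup>+\<tau>. f \<tau> w \<partial>lborel) = (ennreal (exp (- r * w)) * H (t + w)) * (\<integral>\<^sup>+\<tau>. ennreal (\<theta> * exp (- \<theta> * \<tau>)) * indicator {0..w} \<tau> \<partial>lborel)"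
        unfolding pt by (rule nn_integral_cmult) simp
      also have "\<dots> = (ennreal (exp (- r * w)) * H (t + w)) * ennreal (1 - exp (- \<theta> * w))"
        by (simp only: exp_int[OF th True])
      finally show ?thesis using True th
        by (simp add: Ek_def ennreal_mult'' mult_ac)
    next
      case False
      then have "f \<tau> w = 0" for \<tau> by (simp add: pt)
      then show ?thesis using False by (simp add: Ek_def)
    qed
  qed
  also have "(\<integral>\<^sup>+\<tau>. ennreal (Ek (r + \<theta>) \<tau>) * H (t + \<tau>) \<partial>lborel) + \<dots>
      = (\<integral>\<^sup>+w. ennreal (Ek (r + \<theta>) w) * H (t + w) + ennreal (Ek r w * (1 - exp (- \<theta> * w))) * H (t + w) \<partial>lborel)"
    by (rule nn_integral_add[symmetric]) simp_all
  also have "\<dots> = (\<integral>\<^sup>+w. ennreal (Ek r w) * H (t + w) \<partial>lborel)"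
  proof (rule nn_integral_cong)
    fix w :: real
    show "ennreal (Ek (r + \<theta>) w) * H (t + w) + ennreal (Ek r w * (1 - exp (- \<theta> * w))) * H (t + w) = ennreal (Ek r w) * H (t + w)"
    proof (cases "0 \<le> w")
      case True
      have nn: "0 \<le> 1 - exp (- \<theta> * w)" using True th by simp
      have "Ek (r + \<theta>) w + Ek r w * (1 - exp (- \<theta> * w)) = Ek r w"
        using True by (simp add: Ek_def algebra_simps exp_add[symmetric])
      then have "ennreal (Ek (r + \<theta>) w) + ennreal (Ek r w * (1 - exp (- \<theta> * w))) = ennreal (Ek r w)"
        using nn True by (subst ennreal_plus[symmetric]) (auto simp: Ek_def)
      then show ?thesis by (simp add: distrib_right[symmetric])
    next
      case False then show ?thesis by (simp add: Ek_def)
    qed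
  qed
  finally show ?thesis .
qed

lemma L4:
  assumes r: "0 < r" "r \<le> r'"
  shows "(\<integral>\<^sup>+\<tau>. ennreal (Ek r' \<tau>) * (ennreal r * cT T (t + \<tau>)) \<partial>lborel) \<le> cT T t"
proof (cases "t \<le> T")
  case True
  have "(\<integral>\<^sup>+\<tau>. ennreal (Ek r' \<tau>) * (ennreal r * cT T (t + \<tau>)) \<partial>lborel) \<le> (\<integral>\<^sup>+\<tau>. ennreal (exponential_density r' \<tau>) \<partial>lborel)"
  proof (rule nn_integral_mono)
    fix \<tau> :: real
    have "ennreal (Ek r' \<tau>) * (ennreal r * cT T (t + \<tau>)) \<le> ennreal (Ek r' \<tau>) * ennreal r"
      by (intro mult_left_mono) (auto simp: cT_def)
    also have "\<dots> = ennreal (Ek r' \<tau> * r)" using r by (simp add: Ek_def ennreal_mult'')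
    also have "\<dots> \<le> ennreal (exponential_density r' \<tau>)"
      using r by (auto simp: Ek_def exponential_density_def mult.commute intro!: ennreal_leI mult_left_mono)
    finally show "ennreal (Ek r' \<tau>) * (ennreal r * cT T (t + \<tau>)) \<le> ennreal (exponential_density r' \<tau>)" .
  qed
  also have "\<dots> = 1"
  proof -
    interpret prob_space "density lborel (exponential_density r')"
      using r by (intro prob_space_exponential_density) simp
    have "emeasure (density lborel (exponential_density r')) UNIV = 1"
      using emeasure_space_1 by simp
    then show ?thesis by (simp add: emeasure_density)
  qed
  finally show ?thesis using True by (simp add: cT_def)
next
  case False
  have "(\<integral>\<^sup>+\<tau>. ennreal (Ek r' \<tau>) * (ennreal r * cT T (t + \<tau>)) \<partial>lborel) = (\<integral>\<^sup>+(\<tau>::real). 0 \<partial>lborel)"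
  proof (rule nn_integral_cong)
    fix x :: real
    show "ennreal (Ek r' x) * (ennreal r * cT T (t + x)) = 0"
    proof (cases "0 \<le> x")
      case True then have "\<not> t + x \<le> T" using False by simp
      then show ?thesis by (simp add: cT_def)
    qed (simp add: Ek_def)
  qed
  then show ?thesis by simp
qed

locale model =
  fixes l :: nat and lam mu :: "nat \<Rightarrow> real" and \<theta> :: real
  assumes lam_pos: "\<And>i. i \<le> l \<Longrightarrow> 0 < lam i"
    and mu_pos: "\<And>j. j \<le> l \<Longrightarrow> 0 < mu j"
    and th_pos: "0 < \<theta>"
begin

abbreviation "rt \<equiv> total_rate l lam mu \<theta>"
abbreviation "J \<equiv> jump_dist l lam mu \<theta>"
abbreviation "K \<equiv> step_kernel l lam mu \<theta>"

lemma rt_pos: "0 < rt A"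
proof -
  have "0 < (\<Sum>i\<le>l. lam i)" by (rule sum_pos) (auto intro: lam_pos)
  moreover have "0 < (\<Sum>i\<le>l. mu i)" by (rule sum_pos) (auto intro: mu_pos)
  moreover have "0 \<le> \<theta> * (\<Sum>i\<le>l. real (A ! i))" using th_pos by (intro mult_nonneg_nonneg sum_nonneg) auto
  ultimately show ?thesis unfolding total_rate_def by linarith
qed

lemma sets_J[measurable_cong]: "sets (J p A) = sets (count_space UNIV)"
  by (simp add: jump_dist_def)
lemma space_J[simp]: "space (J p A) = UNIV"
  by (simp add: jump_dist_def)

lemma space_SP[simp]: "space SP = UNIV"
  by (simp add: SP_def space_pair_measure)

lemma return_SP_space: "return SP x \<in> space (subprob_algebra SP)"
  by (simp add: space_subprob_algebra subprob_space_return)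

lemma meas_ret: "(\<lambda>(B, g'). return SP (B, t + \<tau>, g')) \<in> measurable (J p A) (subprob_algebra SP)"
  unfolding measurable_cong_sets[OF sets_J refl] measurable_count_space_eq1
  by (simp add: return_SP_space split: prod.split)

definition inner :: "policy \<Rightarrow> nat list \<Rightarrow> real \<Rightarrow> real \<Rightarrow> (nat list \<times> real \<times> bool) measure" where
  "inner p A t \<tau> = bind (J p A) (\<lambda>(B, g'). return SP (B, t + \<tau>, g'))"

lemma K_eq: "K p (A, t, g) = bind (density lborel (exponential_density (rt A))) (inner p A t)"
  unfolding step_kernel_def inner_def[abs_def] by simp

lemma sets_inner[measurable_cong]: "sets (inner p A t \<tau>) = sets SP"
  unfolding inner_def by (rule sets_bind) (auto split: prod.split)

lemma sets_K[measurable_cong]: "sets (K p s) = sets SP"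
proof -
  obtain A t g where s: "s = (A, t, g)" by (cases s) auto
  show ?thesis unfolding s K_eq by (rule sets_bind) (auto simp: sets_inner)
qed

lemma space_K[simp]: "space (K p s) = UNIV"
  using sets_eq_imp_space_eq[OF sets_K] by simp

lemma space_inner[simp]: "space (inner p A t \<tau>) = UNIV"
  using sets_eq_imp_space_eq[OF sets_inner] by simp

lemma emeasure_inner: "X \<in> sets SP \<Longrightarrow>
   emeasure (inner p A t \<tau>) X = (\<integral>\<^sup>+x. indicator X (fst x, t + \<tau>, snd x) \<partial>J p A)"
  unfolding inner_def
  by (subst emeasure_bind[OF _ meas_ret]) (simp_all add: case_prod_beta')

lemma emeasure_inner_space: "emeasure (inner p A t \<tau>) UNIV = emeasure (J p A) UNIV"
proof -
  have "emeasure (inner p A t \<tau>) UNIV = (\<integral>\<^sup>+x. 1 \<partial>J p A)"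
    using emeasure_inner[of UNIV] by (simp add: sets.top[of SP, simplified])
  also have "\<dots> = emeasure (J p A) UNIV" by simp
  finally show ?thesis .
qed

lemma subprob_J_iff: "subprob_space (J p A) \<longleftrightarrow> emeasure (J p A) UNIV \<le> 1"
  using subprob_space.emeasure_space_le_1[of "J p A"] by (auto intro!: subprob_spaceI)

lemma inner_meas:
  assumes "subprob_space (J p A)"
  shows "inner p A t \<in> measurable borel (subprob_algebra SP)"
proof -
  have eq: "inner p A t = (\<lambda>\<tau>. bind (J p A) (\<lambda>x. return SP (fst x, t + \<tau>, snd x)))"
    by (simp add: inner_def[abs_def] case_prod_beta')
  have m1: "(\<lambda>\<tau>::real. J p A) \<in> measurable borel (subprob_algebra (count_space UNIV))"
    using assms by (intro measurable_const) (simp add: space_subprob_algebra sets_J)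
  have mm: "(\<lambda>(\<tau>::real, x::nat list \<times> bool). (fst x, t + \<tau>, snd x)) \<in> measurable (borel \<Otimes>\<^sub>M count_space UNIV) SP"
    unfolding SP_def by measurable
  have m2: "(\<lambda>(\<tau>, x). return SP (fst x, t + \<tau>, snd x)) \<in> measurable (borel \<Otimes>\<^sub>M count_space UNIV) (subprob_algebra SP)"
    using measurable_compose[OF mm return_measurable] by (simp add: case_prod_beta' comp_def)
  show ?thesis unfolding eq
    by (rule measurable_bind'[OF m1 m2])
qed

lemma K_good:
  assumes "subprob_space (J p A)" "X \<in> sets SP"
  shows "emeasure (K p (A, t, g)) X =
     (\<integral>\<^sup>+\<tau>. ennreal (exponential_density (rt A) \<tau>) * emeasure (inner p A t \<tau>) X \<partial>lborel)"
proof -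
  have m: "inner p A t \<in> measurable (density lborel (exponential_density (rt A))) (subprob_algebra SP)"
    using inner_meas[OF assms(1)] by (subst measurable_cong_sets[OF sets_density refl]) simp
  have m': "(\<lambda>\<tau>. emeasure (inner p A t \<tau>) X) \<in> borel_measurable borel"
    by (rule measurable_compose[OF inner_meas[OF assms(1)] measurable_emeasure_subprob_algebra[OF assms(2)]])
  have "emeasure (K p (A, t, g)) X = (\<integral>\<^sup>+\<tau>. emeasure (inner p A t \<tau>) X \<partial>density lborel (exponential_density (rt A)))"
    unfolding K_eq by (rule emeasure_bind[OF _ m assms(2)]) simp
  also have "\<dots> = (\<integral>\<^sup>+\<tau>. ennreal (exponential_density (rt A) \<tau>) * emeasure (inner p A t \<tau>) X \<partial>lborel)"
    by (rule nn_integral_density) (simp_all add: m')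
  finally show ?thesis .
qed

lemma K_good_subprob:
  assumes "subprob_space (J p A)"
  shows "subprob_space (K p (A, t, g))"
proof -
  have m: "inner p A t \<in> measurable (density lborel (exponential_density (rt A))) (subprob_algebra SP)"
    using inner_meas[OF assms(1)] by (subst measurable_cong_sets[OF sets_density refl]) simp
  show ?thesis unfolding K_eq
    by (rule subprob_space_bind[OF _ m]) (simp add: prob_space_exponential_density rt_pos prob_space_imp_subprob_space)
qed

lemma K_bad:
  assumes "\<not> subprob_space (J p A)"
  shows "emeasure (K p (A, t, g)) X = 0"
  unfolding K_eq
proof (rule bind_null)
  fix \<tau>
  have "\<not> subprob_space (inner p A t \<tau>)"
  proof
    assume "subprob_space (inner p A t \<tau>)"
    then have "emeasure (inner p A t \<tau>) (space (inner p A t \<tau>)) \<le> 1"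
      by (rule subprob_space.emeasure_space_le_1)
    then show False using assms emeasure_inner_space[of p A t \<tau>]
      by (simp add: subprob_J_iff)
  qed
  then show "inner p A t \<tau> \<notin> space (subprob_algebra (inner p A t (SOME x. x \<in> space (density lborel (exponential_density (rt A))))))"
    by (simp add: space_subprob_algebra)
qed simp

lemma K_subprob: "subprob_space (K p s)"
proof -
  obtain A t g where s: "s = (A, t, g)" by (cases s) auto
  show ?thesis
  proof (cases "subprob_space (J p A)")
    case True then show ?thesis using K_good_subprob s by simp
  next
    case False
    have "emeasure (K p s) (space (K p s)) = 0" using K_bad[OF False] s by simp
    moreover have "space (K p s) \<noteq> {}" by simp
    ultimately show ?thesis by (intro subprob_spaceI) auto
  qed
qed

lemma K_indep: "K p (A, t, g) = K p (A, t, False)"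
  by (simp add: K_eq)

lemma K_meas: "K p \<in> measurable SP (subprob_algebra SP)"
proof (rule measurable_subprob_algebra)
  fix s show "subprob_space (K p s)" by (rule K_subprob)
  show "sets (K p s) = sets SP" by (rule sets_K)
next
  fix X assume X: "X \<in> sets SP"
  define q where "q A t = emeasure (K p (A, t, False)) X" for A t
  have qm: "q A \<in> borel_measurable borel" for A
  proof (cases "subprob_space (J p A)")
    case True
    interpret Jf: subprob_space "J p A" by (rule True)
    have mm: "(\<lambda>(z::real \<times> real, x::nat list \<times> bool). (fst x, fst z + snd z, snd x)) \<in> measurable ((borel \<Otimes>\<^sub>M lborel) \<Otimes>\<^sub>M count_space UNIV) SP"
      unfolding SP_def by measurable
    have mm': "(\<lambda>(z::real \<times> real, x::nat list \<times> bool). (fst x, fst z + snd z, snd x)) \<in> measurable ((borel \<Otimes>\<^sub>M lborel) \<Otimes>\<^sub>M J p A) SP"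
      using mm by (subst measurable_cong_sets[OF sets_pair_measure_cong[OF refl sets_J] refl])
    have mi: "(\<lambda>(z, x). indicator X (fst x, fst z + snd z, snd x) :: ennreal) \<in> borel_measurable ((borel \<Otimes>\<^sub>M lborel) \<Otimes>\<^sub>M J p A)"
      using measurable_compose[OF mm' borel_measurable_indicator[OF X]]
      by (simp only: comp_def case_prod_unfold)
    have m1: "(\<lambda>z. \<integral>\<^sup>+x. indicator X (fst x, fst z + snd z, snd x) \<partial>J p A) \<in> borel_measurable (borel \<Otimes>\<^sub>M lborel)"
      by (rule Jf.borel_measurable_nn_integral[OF mi])
    have m0: "(\<lambda>z::real\<times>real. ennreal (exponential_density (rt A) (snd z))) \<in> borel_measurable (borel \<Otimes>\<^sub>M lborel)"
      by measurable
    have m2: "(\<lambda>(t, \<tau>). ennreal (exponential_density (rt A) \<tau>) * (\<integral>\<^sup>+x. indicator X (fst x, t + \<tau>, snd x) \<partial>J p A)) \<in> borel_measurable (borel \<Otimes>\<^sub>M lborel)"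
      using borel_measurable_times_ennreal[OF m0 m1] by (simp only: case_prod_unfold)
    have "q A = (\<lambda>t. \<integral>\<^sup>+\<tau>. ennreal (exponential_density (rt A) \<tau>) * (\<integral>\<^sup>+x. indicator X (fst x, t + \<tau>, snd x) \<partial>J p A) \<partial>lborel)"
      unfolding q_def by (intro ext) (simp only: K_good[OF True X] emeasure_inner[OF X])
    also have "\<dots> \<in> borel_measurable borel"
      by (rule lborel.borel_measurable_nn_integral[OF m2])
    finally show ?thesis .
  next
    case False
    then have "q A = (\<lambda>t. 0)" by (simp add: q_def fun_eq_iff K_bad)
    then show ?thesis by simp
  qed
  have h0: "(\<lambda>s. fst (snd s)) \<in> measurable SP borel" unfolding SP_def by measurable
  have h1: "(\<lambda>s. q A (fst (snd s))) \<in> borel_measurable SP" for A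
    by (rule measurable_compose[OF h0 qm])
  have h2: "fst \<in> measurable SP (count_space UNIV)" unfolding SP_def by measurable
  have "(\<lambda>s. q (fst s) (fst (snd s))) \<in> borel_measurable SP"
    using measurable_compose_countable'[where f="\<lambda>A s. q A (fst (snd s))" and g=fst and I=UNIV, OF h1 h2] by simp
  moreover have "(\<lambda>s. emeasure (K p s) X) = (\<lambda>s. q (fst s) (fst (snd s)))"
  proof
    fix s :: "nat list \<times> real \<times> bool"
    obtain A t g where s: "s = (A, t, g)" by (cases s) auto
    show "emeasure (K p s) X = q (fst s) (fst (snd s))"
      unfolding s q_def by (simp add: K_eq)
  qed
  ultimately show "(\<lambda>s. emeasure (K p s) X) \<in> borel_measurable SP" by simp
qed

primrec jl :: "policy \<Rightarrow> nat list \<times> real \<times> bool \<Rightarrow> nat \<Rightarrow> (nat list \<times> real \<times> bool) measure" where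
  "jl p s 0 = return SP s"
| "jl p s (Suc n) = bind (jl p s n) (K p)"

lemma jump_law_jl: "jump_law l lam mu \<theta> p A0 n = jl p (A0, 0, False) n"
  by (induction n) simp_all

lemma jl_meas: "(\<lambda>s. jl p s n) \<in> measurable SP (subprob_algebra SP)"
proof (induction n)
  case 0 show ?case using return_measurable[of SP] by simp
next
  case (Suc n)
  have "(\<lambda>(x, y). K p y) \<in> measurable (SP \<Otimes>\<^sub>M SP) (subprob_algebra SP)"
    using measurable_compose[OF measurable_snd K_meas] by (simp add: case_prod_unfold comp_def)
  then show ?case using measurable_bind'[OF Suc] by simp
qed

lemma jl_Suc': "jl p s (Suc n) = bind (K p s) (\<lambda>s'. jl p s' n)"
proof (induction n arbitrary: s)
  case 0
  have "jl p s (Suc 0) = K p s" by (simp add: bind_return[OF K_meas])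
  moreover have "bind (K p s) (\<lambda>s'. jl p s' 0) = K p s"
    using bind_return''[OF sets_K] by simp
  ultimately show ?case by simp
next
  case (Suc n)
  have "jl p s (Suc (Suc n)) = bind (bind (K p s) (\<lambda>s'. jl p s' n)) (K p)"
    using Suc by simp
  also have "\<dots> = bind (K p s) (\<lambda>s'. bind (jl p s' n) (K p))"
  proof (rule bind_assoc[OF _ K_meas])
    show "(\<lambda>s'. jl p s' n) \<in> measurable (K p s) (subprob_algebra SP)"
      using jl_meas by (subst measurable_cong_sets[OF sets_K refl])
  qed
  finally show ?case by simp
qed

definition XT :: "real \<Rightarrow> (nat list \<times> real \<times> bool) set" where
  "XT T = {(B, t, g). g \<and> t \<le> T}"

lemma XT_sets: "XT T \<in> sets SP"
proof -
  have "XT T = UNIV \<times> ({..T} \<times> {True})" by (auto simp: XT_def)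
  then show ?thesis unfolding SP_def by (auto intro!: pair_measureI)
qed

definition cnt :: "policy \<Rightarrow> real \<Rightarrow> nat \<Rightarrow> nat list \<times> real \<times> bool \<Rightarrow> ennreal" where
  "cnt p T n s = (\<Sum>k<n. emeasure (jl p s (Suc k)) (XT T))"

lemma emeasure_jl_meas: "(\<lambda>s. emeasure (jl p s k) (XT T)) \<in> borel_measurable SP"
  by (rule measurable_compose[OF jl_meas measurable_emeasure_subprob_algebra[OF XT_sets]])

lemma cnt_meas: "cnt p T n \<in> borel_measurable SP"
  unfolding cnt_def[abs_def] by (intro borel_measurable_sum emeasure_jl_meas)

lemma cnt_Suc: "cnt p T (Suc n) s = (\<integral>\<^sup>+s'. indicator (XT T) s' + cnt p T n s' \<partial>K p s)"
proof -
  have "cnt p T (Suc n) s = (\<Sum>k<Suc n. \<integral>\<^sup>+s'. emeasure (jl p s' k) (XT T) \<partial>K p s)"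
    unfolding cnt_def jl_Suc'
    by (intro sum.cong refl, rule emeasure_bind[OF _ _ XT_sets])
       (simp_all add: measurable_cong_sets[OF sets_K refl] jl_meas)
  also have "\<dots> = (\<integral>\<^sup>+s'. (\<Sum>k<Suc n. emeasure (jl p s' k) (XT T)) \<partial>K p s)"
    by (rule nn_integral_sum[symmetric]) (simp add: emeasure_jl_meas measurable_cong_sets[OF sets_K refl])
  also have "\<dots> = (\<integral>\<^sup>+s'. indicator (XT T) s' + cnt p T n s' \<partial>K p s)"
    unfolding cnt_def sum.lessThan_Suc_shift by (simp add: XT_sets)
  finally show ?thesis .
qed


lemma adm_nonneg: "p \<in> admissible l \<Longrightarrow> length A = Suc l \<Longrightarrow> j \<le> l \<Longrightarrow> i \<in> {-1..int l} \<Longrightarrow> 0 \<le> p A j i"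
  unfolding admissible_def by blast
lemma adm_sum: "p \<in> admissible l \<Longrightarrow> length A = Suc l \<Longrightarrow> j \<le> l \<Longrightarrow> p A j (-1) + (\<Sum>i\<le>l. p A j (int i)) = 1"
  unfolding admissible_def sum_int_range[symmetric] by blast
lemma adm_zero: "p \<in> admissible l \<Longrightarrow> length A = Suc l \<Longrightarrow> j \<le> l \<Longrightarrow> i \<le> l \<Longrightarrow> A ! i = 0 \<Longrightarrow> p A j (int i) = 0"
  unfolding admissible_def by blast
lemma adm_zero2: "p \<in> admissible l \<Longrightarrow> length A = Suc l \<Longrightarrow> j \<le> l \<Longrightarrow> i \<le> l \<Longrightarrow> i \<noteq> 0 \<Longrightarrow> i \<noteq> j \<Longrightarrow> p A j (int i) = 0"
  unfolding admissible_def by blast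

lemma events_nonneg:
  assumes "p \<in> admissible l" "length A = Suc l" "e \<in> set (events l lam mu \<theta> p A)"
  shows "0 \<le> fst e"
proof -
  have l0: "i \<le> l \<Longrightarrow> 0 \<le> lam i" for i using lam_pos[of i] by simp
  have m0: "i \<le> l \<Longrightarrow> 0 \<le> mu i" for i using mu_pos[of i] by simp
  show ?thesis
    using assms(3) th_pos l0 m0 adm_nonneg[OF assms(1,2)]
    unfolding events_def
    by (auto simp del: upt_Suc intro!: mult_nonneg_nonneg)
qed

lemma events_total:
  assumes "p \<in> admissible l" "length A = Suc l"
  shows "(\<Sum>e\<leftarrow>events l lam mu \<theta> p A. fst e) = rt A"
proof -
  have e1: "(\<Sum>e\<leftarrow>events l lam mu \<theta> p A. fst e) = (\<Sum>i\<le>l. lam i) + (\<Sum>i\<le>l. \<theta> * real (A!i)) + (\<Sum>j\<le>l. \<Sum>i\<le>l. mu j * p A j (int i)) + (\<Sum>j\<le>l. mu j * p A j (-1))"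
    using events_sum[where F="\<lambda>x s. x"] by simp
  have e2: "(\<Sum>j\<le>l. \<Sum>i\<le>l. mu j * p A j (int i)) + (\<Sum>j\<le>l. mu j * p A j (-1)) = (\<Sum>j\<le>l. mu j * (p A j (-1) + (\<Sum>i\<le>l. p A j (int i))))"
    by (simp add: sum.distrib[symmetric] sum_distrib_left algebra_simps)
  have e3: "(\<Sum>j\<le>l. mu j * (p A j (-1) + (\<Sum>i\<le>l. p A j (int i)))) = (\<Sum>j\<le>l. mu j)"
    using adm_sum[OF assms] by simp
  show ?thesis unfolding total_rate_def e1 add.assoc[of _ "\<Sum>j\<le>l. \<Sum>i\<le>l. mu j * p A j (int i)"] e2 e3
    by (simp add: sum_distrib_left)
qed

lemma J_density_eq:
  assumes "p \<in> admissible l" "length A = Suc l"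
  shows "ennreal (\<Sum>e\<leftarrow>events l lam mu \<theta> p A. if snd e = x then fst e / rt A else 0)
       = (\<Sum>e\<leftarrow>events l lam mu \<theta> p A. ennreal (fst e / rt A) * indicator {snd e} x)"
proof -
  have "ennreal (\<Sum>e\<leftarrow>events l lam mu \<theta> p A. if snd e = x then fst e / rt A else 0)
      = (\<Sum>e\<leftarrow>events l lam mu \<theta> p A. ennreal (if snd e = x then fst e / rt A else 0))"
    using events_nonneg[OF assms] rt_pos[of A] by (intro ennreal_sum_list) auto
  also have "\<dots> = (\<Sum>e\<leftarrow>events l lam mu \<theta> p A. ennreal (fst e / rt A) * indicator {snd e} x)"
    by (intro arg_cong[where f=sum_list] map_cong refl) (auto simp: indicator_def)
  finally show ?thesis .
qed

lemma nn_integral_J: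
  assumes "p \<in> admissible l" "length A = Suc l"
  shows "(\<integral>\<^sup>+x. f x \<partial>J p A) = (\<Sum>e\<leftarrow>events l lam mu \<theta> p A. ennreal (fst e / rt A) * f (snd e))"
proof -
  have "(\<integral>\<^sup>+x. f x \<partial>J p A) = (\<integral>\<^sup>+x. ennreal (\<Sum>e\<leftarrow>events l lam mu \<theta> p A. if snd e = x then fst e / rt A else 0) * f x \<partial>count_space UNIV)"
    unfolding jump_dist_def by (rule nn_integral_density) simp_all
  also have "\<dots> = (\<integral>\<^sup>+x. (\<Sum>e\<leftarrow>events l lam mu \<theta> p A. ennreal (fst e / rt A) * indicator {snd e} x) * f x \<partial>count_space UNIV)"
    by (simp only: J_density_eq[OF assms])
  also have "\<dots> = (\<Sum>e\<leftarrow>events l lam mu \<theta> p A. ennreal (fst e / rt A) * f (snd e))"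
    by (rule nn_integral_count_list[of "\<lambda>x. ennreal (x / rt A)"])
  finally show ?thesis .
qed

lemma J_prob:
  assumes "p \<in> admissible l" "length A = Suc l"
  shows "emeasure (J p A) UNIV = 1"
proof -
  have "emeasure (J p A) UNIV = (\<integral>\<^sup>+x. 1 \<partial>J p A)" by simp
  also have "\<dots> = (\<Sum>e\<leftarrow>events l lam mu \<theta> p A. ennreal (fst e / rt A))"
    using nn_integral_J[OF assms, of "\<lambda>_. 1"] by simp
  also have "\<dots> = ennreal (\<Sum>e\<leftarrow>events l lam mu \<theta> p A. fst e / rt A)"
    using events_nonneg[OF assms] rt_pos[of A] by (intro ennreal_sum_list[symmetric]) auto
  also have "(\<Sum>e\<leftarrow>events l lam mu \<theta> p A. fst e / rt A) = (\<Sum>e\<leftarrow>events l lam mu \<theta> p A. fst e) / rt A"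
    by (induction "events l lam mu \<theta> p A") (simp_all add: sum_list_const_mult[symmetric] divide_inverse mult.commute)
  also have "\<dots> = 1" using events_total[OF assms] rt_pos[of A] by simp
  finally show ?thesis by simp
qed

lemma J_subprob:
  assumes "p \<in> admissible l" "length A = Suc l"
  shows "subprob_space (J p A)"
  using J_prob[OF assms] by (simp add: subprob_J_iff)

lemma nn_integral_K:
  assumes "subprob_space (J p A)" "h \<in> borel_measurable SP"
  shows "(\<integral>\<^sup>+s'. h s' \<partial>K p (A, t, g)) =
     (\<integral>\<^sup>+\<tau>. ennreal (exponential_density (rt A) \<tau>) * (\<integral>\<^sup>+x. h (fst x, t + \<tau>, snd x) \<partial>J p A) \<partial>lborel)"
proof -
  have m: "inner p A t \<in> measurable (density lborel (exponential_density (rt A))) (subprob_algebra SP)"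
    using inner_meas[OF assms(1)] by (subst measurable_cong_sets[OF sets_density refl]) simp
  have inn: "(\<integral>\<^sup>+y. h y \<partial>inner p A t \<tau>) = (\<integral>\<^sup>+x. h (fst x, t + \<tau>, snd x) \<partial>J p A)" for \<tau>
    unfolding inner_def
    by (subst nn_integral_bind[OF assms(2) meas_ret]) (auto intro!: nn_integral_cong simp: nn_integral_return assms(2) split: prod.split)
  have mi: "(\<lambda>\<tau>. \<integral>\<^sup>+y. h y \<partial>inner p A t \<tau>) \<in> borel_measurable borel"
    by (rule measurable_compose[OF inner_meas[OF assms(1)] nn_integral_measurable_subprob_algebra[OF assms(2)]])
  have "(\<integral>\<^sup>+s'. h s' \<partial>K p (A, t, g)) = (\<integral>\<^sup>+\<tau>. (\<integral>\<^sup>+y. h y \<partial>inner p A t \<tau>) \<partial>density lborel (exponential_density (rt A)))"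
    unfolding K_eq by (rule nn_integral_bind[OF assms(2) m])
  also have "\<dots> = (\<integral>\<^sup>+\<tau>. ennreal (exponential_density (rt A) \<tau>) * (\<integral>\<^sup>+y. h y \<partial>inner p A t \<tau>) \<partial>lborel)"
    by (rule nn_integral_density) (simp_all add: mi)
  finally show ?thesis by (simp only: inn)
qed


definition Hp :: "policy \<Rightarrow> real \<Rightarrow> (nat list \<Rightarrow> real \<Rightarrow> ennreal) \<Rightarrow> nat list \<Rightarrow> real \<Rightarrow> ennreal" where
  "Hp p T F A u = (\<Sum>i\<le>l. ennreal (lam i) * F (up A i) u) + (\<Sum>i\<le>l. ennreal (\<theta> * real (A!i)) * F (dn A i) u)
    + (\<Sum>j\<le>l. \<Sum>i\<le>l. ennreal (mu j * p A j (int i)) * (cT T u + F (dn A i) u))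
    + (\<Sum>j\<le>l. ennreal (mu j * p A j (-1)) * F A u)"


definition Phi :: "policy \<Rightarrow> real \<Rightarrow> (nat list \<Rightarrow> real \<Rightarrow> ennreal) \<Rightarrow> nat list \<Rightarrow> real \<Rightarrow> ennreal" where
  "Phi p T F A t = (\<integral>\<^sup>+\<tau>. ennreal (Ek (rt A) \<tau>) * Hp p T F A (t + \<tau>) \<partial>lborel)"

primrec U :: "policy \<Rightarrow> real \<Rightarrow> nat \<Rightarrow> nat list \<Rightarrow> real \<Rightarrow> ennreal" where
  "U p T 0 = (\<lambda>A t. 0)"
| "U p T (Suc n) = Phi p T (U p T n)"

lemma ed_Ek: "0 \<le> x \<Longrightarrow> ennreal (exponential_density (rt A) \<tau>) * ennreal (x / rt A) = ennreal (Ek (rt A) \<tau>) * ennreal x"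
  using rt_pos[of A]
  by (auto simp: exponential_density_def Ek_def ennreal_mult'[symmetric] ennreal_mult''[symmetric] mult_ac)

lemma cnt_U:
  assumes "p \<in> admissible l"
  shows "length A = Suc l \<Longrightarrow> cnt p T n (A, t, g) = U p T n A t"
proof (induction n arbitrary: A t g)
  case 0 then show ?case by (simp add: cnt_def)
next
  case (Suc n)
  let ?es = "events l lam mu \<theta> p A"
  have hm: "(\<lambda>s'. indicator (XT T) s' + cnt p T n s') \<in> borel_measurable SP"
    using cnt_meas XT_sets by measurable
  have "cnt p T (Suc n) (A, t, g) = (\<integral>\<^sup>+\<tau>. ennreal (exponential_density (rt A) \<tau>) *
      (\<integral>\<^sup>+x. indicator (XT T) (fst x, t + \<tau>, snd x) + cnt p T n (fst x, t + \<tau>, snd x) \<partial>J p A) \<partial>lborel)"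
    unfolding cnt_Suc by (rule nn_integral_K[OF J_subprob[OF assms Suc.prems] hm])
  also have "\<dots> = (\<integral>\<^sup>+\<tau>. ennreal (Ek (rt A) \<tau>) * Hp p T (U p T n) A (t + \<tau>) \<partial>lborel)"
  proof (rule nn_integral_cong)
    fix \<tau>
    define \<phi> where "\<phi> x = indicator (XT T) (fst x, t + \<tau>, snd x) + cnt p T n (fst x, t + \<tau>, snd x)" for x
    have "ennreal (exponential_density (rt A) \<tau>) * (\<integral>\<^sup>+x. \<phi> x \<partial>J p A)
        = ennreal (exponential_density (rt A) \<tau>) * (\<Sum>e\<leftarrow>?es. ennreal (fst e / rt A) * \<phi> (snd e))"
      by (simp only: nn_integral_J[OF assms Suc.prems])
    also have "\<dots> = (\<Sum>e\<leftarrow>?es. ennreal (exponential_density (rt A) \<tau>) * ennreal (fst e / rt A) * \<phi> (snd e))"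
      by (simp add: sum_list_const_mult[symmetric] mult.assoc)
    also have "\<dots> = (\<Sum>e\<leftarrow>?es. ennreal (Ek (rt A) \<tau>) * (ennreal (fst e) * \<phi> (snd e)))"
      using events_nonneg[OF assms Suc.prems]
      by (intro arg_cong[where f=sum_list] map_cong refl) (simp add: ed_Ek mult.assoc)
    also have "\<dots> = ennreal (Ek (rt A) \<tau>) * (\<Sum>e\<leftarrow>?es. (\<lambda>x s. ennreal x * \<phi> s) (fst e) (snd e))"
      by (simp add: sum_list_const_mult)
    also have "(\<Sum>e\<leftarrow>?es. (\<lambda>x s. ennreal x * \<phi> s) (fst e) (snd e)) = Hp p T (U p T n) A (t + \<tau>)"
      unfolding events_sum[where F="\<lambda>x s. ennreal x * \<phi> s"] unfolding Hp_def \<phi>_def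
      using Suc.IH Suc.prems by (simp add: XT_def cT_def indicator_def)
    finally show "ennreal (exponential_density (rt A) \<tau>) * (\<integral>\<^sup>+x. indicator (XT T) (fst x, t + \<tau>, snd x) + cnt p T n (fst x, t + \<tau>, snd x) \<partial>J p A)
      = ennreal (Ek (rt A) \<tau>) * Hp p T (U p T n) A (t + \<tau>)" unfolding \<phi>_def .
  qed
  finally show ?case by (simp add: Phi_def)
qed

lemma expected_matches_U:
  assumes "p \<in> admissible l" "length A0 = Suc l"
  shows "expected_matches l lam mu \<theta> p A0 T = (SUP n. U p T n A0 0)"
proof -
  have "expected_matches l lam mu \<theta> p A0 T = (\<Sum>n. emeasure (jl p (A0, 0, False) (Suc n)) (XT T))"
    unfolding expected_matches_def jump_law_jl XT_def ..
  also have "\<dots> = (SUP n. cnt p T n (A0, 0, False))"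
    unfolding cnt_def by (rule suminf_eq_SUP)
  also have "\<dots> = (SUP n. U p T n A0 0)"
    using cnt_U[OF assms(1) assms(2)] by simp
  finally show ?thesis .
qed


lemma Hp_mono:
  assumes "\<And>B u. length B = Suc l \<Longrightarrow> F B u \<le> G B u" "length A = Suc l"
  shows "Hp p T F A u \<le> Hp p T G A u"
  unfolding Hp_def using assms
  by (intro add_mono sum_mono mult_left_mono) auto

lemma Phi_mono:
  assumes "\<And>B u. length B = Suc l \<Longrightarrow> F B u \<le> G B u" "length A = Suc l"
  shows "Phi p T F A t \<le> Phi p T G A t"
  unfolding Phi_def using Hp_mono[OF assms]
  by (intro nn_integral_mono mult_left_mono) auto

lemma Hp_meas:
  assumes "\<And>B. F B \<in> borel_measurable borel"
  shows "Hp p T F A \<in> borel_measurable borel"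
proof -
  note assms[measurable]
  show ?thesis unfolding Hp_def[abs_def] cT_def by measurable
qed

lemma Phi_meas:
  assumes "\<And>B. F B \<in> borel_measurable borel"
  shows "Phi p T F A \<in> borel_measurable borel"
proof -
  note Hp_meas[OF assms, measurable]
  have "(\<lambda>(t, \<tau>). ennreal (Ek (rt A) \<tau>) * Hp p T F A (t + \<tau>)) \<in> borel_measurable (borel \<Otimes>\<^sub>M lborel)"
    unfolding Ek_def by measurable
  then show ?thesis unfolding Phi_def[abs_def] by (rule lborel.borel_measurable_nn_integral)
qed

definition G :: "real \<Rightarrow> (nat list \<Rightarrow> real \<Rightarrow> ennreal) \<Rightarrow> nat list \<Rightarrow> nat \<Rightarrow> real \<Rightarrow> ennreal" where
  "G T F A j u = (if 0 < A ! j then cT T u + F (dn A j) u else if 0 < A ! 0 then cT T u + F (dn A 0) u else F A u)"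

definition arr :: "(nat list \<Rightarrow> real \<Rightarrow> ennreal) \<Rightarrow> nat list \<Rightarrow> real \<Rightarrow> ennreal" where
  "arr F A u = (\<Sum>i\<le>l. ennreal (lam i) * F (up A i) u)"
definition abd :: "(nat list \<Rightarrow> real \<Rightarrow> ennreal) \<Rightarrow> nat list \<Rightarrow> real \<Rightarrow> ennreal" where
  "abd F A u = (\<Sum>i\<le>l. ennreal (\<theta> * real (A!i)) * F (dn A i) u)"
definition jobs :: "real \<Rightarrow> (nat list \<Rightarrow> real \<Rightarrow> ennreal) \<Rightarrow> nat list \<Rightarrow> real \<Rightarrow> ennreal" where
  "jobs T F A u = (\<Sum>j\<le>l. ennreal (mu j) * G T F A j u)"

lemma Hp_split: "Hp p T F A u = arr F A u + abd F A u +
   (\<Sum>j\<le>l. (\<Sum>i\<le>l. ennreal (mu j * p A j (int i)) * (cT T u + F (dn A i) u)) + ennreal (mu j * p A j (-1)) * F A u)"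
  unfolding Hp_def arr_def abd_def by (simp add: sum.distrib add.assoc)

lemma acr_job:
  assumes "length A = Suc l" "j \<le> l"
  shows "(\<Sum>i\<le>l. ennreal (mu j * acr A j (int i)) * (cT T u + F (dn A i) u)) + ennreal (mu j * acr A j (-1)) * F A u
       = ennreal (mu j) * G T F A j u"
proof (cases "0 < A ! j")
  case True
  have "(\<Sum>i\<le>l. ennreal (mu j * acr A j (int i)) * (cT T u + F (dn A i) u)) = (\<Sum>i\<le>l. if i = j then ennreal (mu j) * (cT T u + F (dn A i) u) else 0)"
    using True by (intro sum.cong refl) (auto simp: acr_def)
  then show ?thesis using True assms by (simp add: G_def acr_def sum.delta)
next
  case False
  show ?thesis
  proof (cases "0 < A ! 0")
    case True
    have "(\<Sum>i\<le>l. ennreal (mu j * acr A j (int i)) * (cT T u + F (dn A i) u)) = (\<Sum>i\<le>l. if i = 0 then ennreal (mu j) * (cT T u + F (dn A i) u) else 0)"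
      using True False by (intro sum.cong refl) (auto simp: acr_def)
    then show ?thesis using True False assms by (simp add: G_def acr_def sum.delta)
  next
    case False2: False
    have "(\<Sum>i\<le>l. ennreal (mu j * acr A j (int i)) * (cT T u + F (dn A i) u)) = 0"
      using False False2 by (intro sum.neutral) (auto simp: acr_def)
    then show ?thesis using False False2 assms by (simp add: G_def acr_def)
  qed
qed

lemma Hacr: "length A = Suc l \<Longrightarrow> Hp acr T F A u = arr F A u + abd F A u + jobs T F A u"
  unfolding Hp_split jobs_def by (simp add: acr_job)

definition PA :: "(nat list \<Rightarrow> real \<Rightarrow> ennreal) \<Rightarrow> bool" where
  "PA F \<longleftrightarrow> (\<forall>C u j. length C = Suc l \<longrightarrow> 1 \<le> j \<longrightarrow> j \<le> l \<longrightarrow> F (up C j) u \<le> F (up C 0) u)"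
definition PB :: "real \<Rightarrow> (nat list \<Rightarrow> real \<Rightarrow> ennreal) \<Rightarrow> bool" where
  "PB T F \<longleftrightarrow> (\<forall>C u i. length C = Suc l \<longrightarrow> i \<le> l \<longrightarrow> F (up C i) u \<le> F C u + cT T u)"

lemma PA_D: "PA F \<Longrightarrow> length C = Suc l \<Longrightarrow> 1 \<le> j \<Longrightarrow> j \<le> l \<Longrightarrow> F (up C j) u \<le> F (up C 0) u"
  unfolding PA_def by blast
lemma PB_D: "PB T F \<Longrightarrow> length C = Suc l \<Longrightarrow> i \<le> l \<Longrightarrow> F (up C i) u \<le> F C u + cT T u"
  unfolding PB_def by blast

lemma PB_dn: "PB T F \<Longrightarrow> length A = Suc l \<Longrightarrow> i \<le> l \<Longrightarrow> 0 < A ! i \<Longrightarrow> F A u \<le> cT T u + F (dn A i) u"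
  using PB_D[of T F "dn A i" i u] up_dn[of i A] by (simp add: add.commute)

lemma greedy_term:
  assumes PA: "PA F" and PB: "PB T F" and p: "p \<in> admissible l" and A: "length A = Suc l" and j: "j \<le> l"
  shows "(\<Sum>i\<le>l. ennreal (mu j * p A j (int i)) * (cT T u + F (dn A i) u)) + ennreal (mu j * p A j (-1)) * F A u
       \<le> ennreal (mu j) * G T F A j u"
proof -
  let ?G = "G T F A j u"
  have pn: "i \<le> l \<Longrightarrow> 0 \<le> p A j (int i)" for i using adm_nonneg[OF p A j] by auto
  have pm: "0 \<le> p A j (-1)" using adm_nonneg[OF p A j] by auto
  have m0: "0 \<le> mu j" using mu_pos[OF j] by simp
  have tm: "ennreal (mu j * p A j (int i)) * (cT T u + F (dn A i) u) \<le> ennreal (mu j * p A j (int i)) * ?G"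
    if i: "i \<le> l" for i
  proof (cases "p A j (int i) = 0")
    case True then show ?thesis by simp
  next
    case False
    then have Ai: "0 < A ! i" using adm_zero[OF p A j i] by auto
    have ij: "i = 0 \<or> i = j" using adm_zero2[OF p A j i] False by auto
    have "cT T u + F (dn A i) u \<le> ?G"
    proof (cases "0 < A ! j")
      case True
      show ?thesis
      proof (cases "i = j")
        case True then show ?thesis using \<open>0 < A ! j\<close> by (simp add: G_def)
      next
        case False
        then have i0: "i = 0" "j \<noteq> 0" using ij by auto
        define C where "C = dn (dn A 0) j"
        have lC: "length C = Suc l" by (simp add: C_def A)
        have e1: "dn A 0 = up C j"
          unfolding C_def using \<open>0 < A ! j\<close> i0 A j by (subst up_dn) (auto simp: nth_dn)
        have e2: "dn A j = up C 0"
          unfolding C_def dn_dn_comm[of A 0 j] using Ai i0 A j by (subst up_dn) (auto simp: nth_dn)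
        have "F (up C j) u \<le> F (up C 0) u" using PA_D[OF PA lC _ j] i0 by simp
        then show ?thesis using True i0 e1 e2 by (simp add: G_def add_left_mono)
      qed
    next
      case False
      then have "i = 0" using ij Ai by auto
      then show ?thesis using False Ai by (simp add: G_def)
    qed
    then show ?thesis by (rule mult_left_mono) simp
  qed
  have rej: "ennreal (mu j * p A j (-1)) * F A u \<le> ennreal (mu j * p A j (-1)) * ?G"
  proof -
    have "F A u \<le> ?G"
      using PB_dn[OF PB A j, of u] PB_dn[OF PB A _ , of 0 u] A by (auto simp: G_def)
    then show ?thesis by (rule mult_left_mono) simp
  qed
  have "(\<Sum>i\<le>l. ennreal (mu j * p A j (int i)) * (cT T u + F (dn A i) u)) + ennreal (mu j * p A j (-1)) * F A u
      \<le> (\<Sum>i\<le>l. ennreal (mu j * p A j (int i)) * ?G) + ennreal (mu j * p A j (-1)) * ?G"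
    by (intro add_mono sum_mono tm rej) auto
  also have "\<dots> = ennreal ((\<Sum>i\<le>l. mu j * p A j (int i)) + mu j * p A j (-1)) * ?G"
  proof -
    have s1: "(\<Sum>i\<le>l. ennreal (mu j * p A j (int i))) = ennreal (\<Sum>i\<le>l. mu j * p A j (int i))"
      using pn m0 by (intro sum_ennreal) auto
    have s0: "0 \<le> (\<Sum>i\<le>l. mu j * p A j (int i))" using pn m0 by (intro sum_nonneg) auto
    have s2: "ennreal ((\<Sum>i\<le>l. mu j * p A j (int i)) + mu j * p A j (-1)) = ennreal (\<Sum>i\<le>l. mu j * p A j (int i)) + ennreal (mu j * p A j (-1))"
      using s0 pm m0 by (intro ennreal_plus) auto
    show ?thesis unfolding s2 distrib_right sum_distrib_right[symmetric] s1 ..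
  qed
  also have "(\<Sum>i\<le>l. mu j * p A j (int i)) + mu j * p A j (-1) = mu j"
  proof -
    have "(\<Sum>i\<le>l. mu j * p A j (int i)) + mu j * p A j (-1) = mu j * (p A j (-1) + (\<Sum>i\<le>l. p A j (int i)))"
      by (simp add: sum_distrib_left algebra_simps)
    then show ?thesis using adm_sum[OF p A j] by simp
  qed
  finally show ?thesis .
qed

lemma greedy:
  assumes "PA F" "PB T F" "p \<in> admissible l" "length A = Suc l"
  shows "Hp p T F A u \<le> Hp acr T F A u"
proof -
  have "Hp p T F A u = arr F A u + abd F A u +
   (\<Sum>j\<le>l. (\<Sum>i\<le>l. ennreal (mu j * p A j (int i)) * (cT T u + F (dn A i) u)) + ennreal (mu j * p A j (-1)) * F A u)"
    by (rule Hp_split)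
  also have "\<dots> \<le> arr F A u + abd F A u + jobs T F A u"
    unfolding jobs_def by (intro add_mono order_refl sum_mono greedy_term[OF assms]) auto
  also have "\<dots> = Hp acr T F A u" by (rule Hacr[symmetric, OF assms(4)])
  finally show ?thesis .
qed


lemma rt_up:
  assumes "length C = Suc l" "i \<le> l"
  shows "rt (up C i) = rt C + \<theta>"
proof -
  have "(\<Sum>k\<le>l. real (up C i ! k)) = (\<Sum>k\<le>l. real (C ! k) + (if k = i then 1 else 0))"
    using assms by (intro sum.cong refl) (auto simp: nth_up)
  also have "\<dots> = (\<Sum>k\<le>l. real (C ! k)) + 1"
    using assms by (simp add: sum.distrib)
  finally show ?thesis unfolding total_rate_def by (simp add: algebra_simps)
qed

lemma arr_up: "arr F (up C i) u = (\<Sum>k\<le>l. ennreal (lam k) * F (up (up C k) i) u)"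
  unfolding arr_def by (intro sum.cong refl) (simp add: up_up_comm[of C i])

lemma abd_up:
  assumes C: "length C = Suc l" and i: "i \<le> l"
  shows "abd F (up C i) u = (\<Sum>k\<le>l. ennreal (\<theta> * real (C ! k)) * F (up (dn C k) i) u) + ennreal \<theta> * F C u"
proof -
  have pk: "ennreal (\<theta> * real (up C i ! k)) * F (dn (up C i) k) u
      = ennreal (\<theta> * real (C ! k)) * F (up (dn C k) i) u + (if k = i then ennreal \<theta> * F C u else 0)"
    if k: "k \<le> l" for k
  proof (cases "k = i")
    case True
    have e1: "up C i ! i = C ! i + 1" using C i by (simp add: nth_up)
    have e2: "dn (up C i) i = C" using C i by (simp add: dn_up)
    have e3: "ennreal (\<theta> * real (C ! i + 1)) = ennreal (\<theta> * real (C ! i)) + ennreal \<theta>"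
    proof -
      have "\<theta> * real (C ! i + 1) = \<theta> * real (C ! i) + \<theta>" by (simp add: algebra_simps)
      then show ?thesis using th_pos by (simp only: ennreal_plus[symmetric]) auto
    qed
    show ?thesis
    proof (cases "0 < C ! i")
      case True
      then have e4: "up (dn C i) i = C" using C i by (intro up_dn) auto
      show ?thesis unfolding \<open>k = i\<close> unfolding e1 e2 e3 e4 distrib_right by simp
    next
      case False
      then have "C ! i = 0" by simp
      then show ?thesis unfolding \<open>k = i\<close> unfolding e1 e2 by simp
    qed
  next
    case False
    have e1: "up C i ! k = C ! k" using False by (simp add: nth_up)
    show ?thesis
    proof (cases "0 < C ! k")
      case True
      have "dn (up C i) k = up (dn C k) i" using C i k True by (intro dn_up_comm) auto
      then show ?thesis unfolding e1 using False by simp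
    next
      case False2: False
      then have "C ! k = 0" by simp
      then show ?thesis unfolding e1 using False by simp
    qed
  qed
  have "abd F (up C i) u = (\<Sum>k\<le>l. ennreal (\<theta> * real (C ! k)) * F (up (dn C k) i) u + (if k = i then ennreal \<theta> * F C u else 0))"
    unfolding abd_def by (intro sum.cong refl pk) simp
  also have "\<dots> = (\<Sum>k\<le>l. ennreal (\<theta> * real (C ! k)) * F (up (dn C k) i) u) + (\<Sum>k\<le>l. if k = i then ennreal \<theta> * F C u else 0)"
    by (rule sum.distrib)
  also have "(\<Sum>k\<le>l. if k = i then ennreal \<theta> * F C u else 0) = ennreal \<theta> * F C u"
    using i by (simp add: sum.delta)
  finally show ?thesis .
qed

lemma Ga:
  assumes PA: "PA F" and PB: "PB T F" and C: "length C = Suc l" and j: "1 \<le> j" "j \<le> l" and jj: "jj \<le> l"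
  shows "G T F (up C j) jj u \<le> G T F (up C 0) jj u"
proof -
  let ?c = "cT T u"
  have lC: "j < length C" "0 < length C" "jj < length C" using C j jj by auto
  have X: "up C 0 ! k = C ! k + (if k = 0 then 1 else 0)" for k using lC by (simp add: nth_up)
  have Y: "up C j ! k = C ! k + (if k = j then 1 else 0)" for k using lC by (simp add: nth_up)
  have PAd: "F (up (dn C k) j) u \<le> F (up (dn C k) 0) u" for k using PA_D[OF PA _ j, of "dn C k"] C by simp
  have dX: "dn (up C 0) k = up (dn C k) 0" if "0 < C ! k" "k \<le> l" for k using that C by (intro dn_up_comm) auto
  have dY: "dn (up C j) k = up (dn C k) j" if "0 < C ! k" "k \<le> l" for k using that C j by (intro dn_up_comm) auto
  have dX0: "dn (up C 0) 0 = C" using lC by (simp add: dn_up)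
  have dYj: "dn (up C j) j = C" using lC by (simp add: dn_up)
  have upd: "up (dn C k) k = C" if "0 < C ! k" "k \<le> l" for k using that C by (intro up_dn) auto
  have PBj: "F (up C j) u \<le> F C u + ?c" using PB_D[OF PB C j(2)] .
  show ?thesis
  proof (cases "jj = j")
    case True
    have GY: "G T F (up C j) jj u = ?c + F C u" using True Y dYj by (simp add: G_def)
    show ?thesis
    proof (cases "0 < C ! j")
      case True
      have "G T F (up C 0) jj u = ?c + F (up (dn C j) 0) u"
        using True \<open>jj = j\<close> X dX[OF True j(2)] j by (simp add: G_def)
      moreover have "F C u \<le> F (up (dn C j) 0) u" using PAd[of j] upd[OF True j(2)] by simp
      ultimately show ?thesis using GY by (simp add: add_left_mono)
    next
      case False
      have "G T F (up C 0) jj u = ?c + F C u"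
        using False \<open>jj = j\<close> X dX0 j by (simp add: G_def)
      then show ?thesis using GY by simp
    qed
  next
    case jjj: False
    show ?thesis
    proof (cases "jj = 0")
      case True
      have GX: "G T F (up C 0) jj u = ?c + F C u" using True X dX0 by (simp add: G_def)
      show ?thesis
      proof (cases "0 < C ! 0")
        case True
        have "G T F (up C j) jj u = ?c + F (up (dn C 0) j) u"
          using True \<open>jj = 0\<close> Y dY[OF True] j by (simp add: G_def)
        moreover have "F (up (dn C 0) j) u \<le> F C u" using PAd[of 0] upd[OF True] by simp
        ultimately show ?thesis using GX by (simp add: add_left_mono)
      next
        case False
        have "G T F (up C j) jj u = F (up C j) u" using False \<open>jj = 0\<close> Y j by (simp add: G_def)
        then show ?thesis using GX PBj by (simp add: add.commute)
      qed
    next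
      case jj0: False
      show ?thesis
      proof (cases "0 < C ! jj")
        case True
        have "G T F (up C 0) jj u = ?c + F (up (dn C jj) 0) u" using True jj0 X dX[OF True jj] by (simp add: G_def)
        moreover have "G T F (up C j) jj u = ?c + F (up (dn C jj) j) u" using True jjj Y dY[OF True jj] by (simp add: G_def)
        ultimately show ?thesis using PAd[of jj] by (simp add: add_left_mono)
      next
        case False
        have GX: "G T F (up C 0) jj u = ?c + F C u" using False jj0 X dX0 by (simp add: G_def)
        show ?thesis
        proof (cases "0 < C ! 0")
          case True
          have "G T F (up C j) jj u = ?c + F (up (dn C 0) j) u"
            using True False jjj Y dY[OF True] j by (simp add: G_def)
          moreover have "F (up (dn C 0) j) u \<le> F C u" using PAd[of 0] upd[OF True] by simp
          ultimately show ?thesis using GX by (simp add: add_left_mono)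
        next
          case False2: False
          have "G T F (up C j) jj u = F (up C j) u" using False False2 jjj Y j by (simp add: G_def)
          then show ?thesis using GX PBj by (simp add: add.commute)
        qed
      qed
    qed
  qed
qed

lemma Gb:
  assumes PA: "PA F" and PB: "PB T F" and C: "length C = Suc l" and i: "i \<le> l" and jj: "jj \<le> l"
  shows "G T F (up C i) jj u \<le> G T F C jj u + cT T u"
proof -
  let ?c = "cT T u"
  have lC: "i < length C" "0 < length C" "jj < length C" using C i jj by auto
  have Xk: "up C i ! k = C ! k + (if k = i then 1 else 0)" for k using lC by (simp add: nth_up)
  have dX: "dn (up C i) k = up (dn C k) i" if "0 < C ! k" "k \<le> l" for k using that C i by (intro dn_up_comm) auto
  have upd: "up (dn C k) k = C" if "0 < C ! k" "k \<le> l" for k using that C by (intro up_dn) auto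
  have PBd: "F (up (dn C k) i) u \<le> F (dn C k) u + ?c" for k using PB_D[OF PB _ i, of "dn C k"] C by simp
  have PBd0: "F (up (dn C k) k) u \<le> F (dn C k) u + ?c" if "k \<le> l" for k using PB_D[OF PB _ that, of "dn C k"] C by simp
  show ?thesis
  proof (cases "0 < C ! jj")
    case True
    have "G T F (up C i) jj u = ?c + F (up (dn C jj) i) u" using True Xk dX[OF True jj] by (simp add: G_def)
    moreover have "G T F C jj u = ?c + F (dn C jj) u" using True by (simp add: G_def)
    ultimately show ?thesis using PBd[of jj] by (simp add: add_left_mono add.assoc add.commute add.left_commute)
  next
    case False
    show ?thesis
    proof (cases "i = jj")
      case True
      have GX: "G T F (up C i) jj u = ?c + F C u" using True False Xk lC by (simp add: G_def dn_up)
      show ?thesis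
      proof (cases "0 < C ! 0")
        case True
        have "G T F C jj u = ?c + F (dn C 0) u" using True False by (simp add: G_def)
        moreover have "F C u \<le> F (dn C 0) u + ?c" using PBd0[of 0] upd[OF True] by simp
        ultimately show ?thesis using GX by (simp add: add_left_mono add.assoc add.commute add.left_commute)
      next
        case False2: False
        have "G T F C jj u = F C u" using False False2 by (simp add: G_def)
        then show ?thesis using GX by (simp add: add.commute)
      qed
    next
      case ij: False
      show ?thesis
      proof (cases "0 < C ! 0")
        case True
        have "G T F (up C i) jj u = ?c + F (up (dn C 0) i) u" using True False ij Xk dX[OF True] by (simp add: G_def)
        moreover have "G T F C jj u = ?c + F (dn C 0) u" using True False by (simp add: G_def)
        ultimately show ?thesis using PBd[of 0] by (simp add: add_left_mono add.assoc add.commute add.left_commute)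
      next
        case False2: False
        show ?thesis
        proof (cases "i = 0")
          case True
          have "G T F (up C i) jj u = ?c + F C u" using True False False2 ij Xk lC by (simp add: G_def dn_up)
          moreover have "G T F C jj u = F C u" using False False2 by (simp add: G_def)
          ultimately show ?thesis by (simp add: add.commute)
        next
          case i0: False
          have "G T F (up C i) jj u = F (up C i) u" using i0 False False2 ij Xk by (simp add: G_def)
          moreover have "G T F C jj u = F C u" using False False2 by (simp add: G_def)
          ultimately show ?thesis using PB_D[OF PB C i] by simp
        qed
      qed
    qed
  qed
qed

lemma Ha:
  assumes PA: "PA F" and PB: "PB T F" and C: "length C = Suc l" and j: "1 \<le> j" "j \<le> l"
  shows "Hp acr T F (up C j) u \<le> Hp acr T F (up C 0) u"
proof -
  have "arr F (up C j) u \<le> arr F (up C 0) u"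
    unfolding arr_up using PA_D[OF PA _ j] C by (intro sum_mono mult_left_mono) auto
  moreover have "abd F (up C j) u \<le> abd F (up C 0) u"
    unfolding abd_up[OF C j(2)] abd_up[OF C le0] using PA_D[OF PA _ j] C
    by (intro add_mono sum_mono mult_left_mono order_refl) auto
  moreover have "jobs T F (up C j) u \<le> jobs T F (up C 0) u"
    unfolding jobs_def using Ga[OF PA PB C j] by (intro sum_mono mult_left_mono) auto
  ultimately show ?thesis using C by (simp add: Hacr add_mono)
qed

lemma Hb:
  assumes PA: "PA F" and PB: "PB T F" and C: "length C = Suc l" and i: "i \<le> l"
  shows "Hp acr T F (up C i) u \<le> Hp acr T F C u + ennreal (rt C) * cT T u + ennreal \<theta> * F C u"
proof -
  let ?c = "cT T u"
  have a: "arr F (up C i) u \<le> arr F C u + ennreal (\<Sum>k\<le>l. lam k) * ?c"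
  proof -
    have "arr F (up C i) u \<le> (\<Sum>k\<le>l. ennreal (lam k) * (F (up C k) u + ?c))"
      unfolding arr_up using PB_D[OF PB _ i] C by (intro sum_mono mult_left_mono) auto
    also have "\<dots> = arr F C u + (\<Sum>k\<le>l. ennreal (lam k)) * ?c"
      by (simp add: arr_def distrib_left sum.distrib sum_distrib_right)
    also have "(\<Sum>k\<le>l. ennreal (lam k)) = ennreal (\<Sum>k\<le>l. lam k)"
      using lam_pos by (intro sum_ennreal) (auto intro: less_imp_le)
    finally show ?thesis .
  qed
  have b: "abd F (up C i) u \<le> abd F C u + ennreal (\<theta> * (\<Sum>k\<le>l. real (C ! k))) * ?c + ennreal \<theta> * F C u"
  proof -
    have "abd F (up C i) u \<le> (\<Sum>k\<le>l. ennreal (\<theta> * real (C ! k)) * (F (dn C k) u + ?c)) + ennreal \<theta> * F C u"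
      unfolding abd_up[OF C i] using PB_D[OF PB _ i] C by (intro add_mono sum_mono mult_left_mono order_refl) auto
    also have "\<dots> = abd F C u + (\<Sum>k\<le>l. ennreal (\<theta> * real (C ! k))) * ?c + ennreal \<theta> * F C u"
      by (simp add: abd_def distrib_left sum.distrib sum_distrib_right)
    also have "(\<Sum>k\<le>l. ennreal (\<theta> * real (C ! k))) = ennreal (\<theta> * (\<Sum>k\<le>l. real (C ! k)))"
      using th_pos by (subst sum_ennreal) (auto simp: sum_distrib_left)
    finally show ?thesis .
  qed
  have c: "jobs T F (up C i) u \<le> jobs T F C u + ennreal (\<Sum>j\<le>l. mu j) * ?c"
  proof -
    have "jobs T F (up C i) u \<le> (\<Sum>j\<le>l. ennreal (mu j) * (G T F C j u + ?c))"
      unfolding jobs_def using Gb[OF PA PB C i] by (intro sum_mono mult_left_mono) auto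
    also have "\<dots> = jobs T F C u + (\<Sum>j\<le>l. ennreal (mu j)) * ?c"
      by (simp add: jobs_def distrib_left sum.distrib sum_distrib_right)
    also have "(\<Sum>j\<le>l. ennreal (mu j)) = ennreal (\<Sum>j\<le>l. mu j)"
      using mu_pos by (intro sum_ennreal) (auto intro: less_imp_le)
    finally show ?thesis .
  qed
  have r: "ennreal (\<Sum>k\<le>l. lam k) + ennreal (\<theta> * (\<Sum>k\<le>l. real (C ! k))) + ennreal (\<Sum>j\<le>l. mu j) = ennreal (rt C)"
  proof -
    have n1: "0 \<le> (\<Sum>k\<le>l. lam k)" using lam_pos by (intro sum_nonneg) (auto intro: less_imp_le)
    have n2: "0 \<le> (\<Sum>k\<le>l. mu k)" using mu_pos by (intro sum_nonneg) (auto intro: less_imp_le)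
    have n3: "0 \<le> \<theta> * (\<Sum>k\<le>l. real (C ! k))" using th_pos by (intro mult_nonneg_nonneg sum_nonneg) auto
    have "ennreal (\<Sum>k\<le>l. lam k) + ennreal (\<theta> * (\<Sum>k\<le>l. real (C ! k))) + ennreal (\<Sum>j\<le>l. mu j)
        = ennreal ((\<Sum>k\<le>l. lam k) + \<theta> * (\<Sum>k\<le>l. real (C ! k)) + (\<Sum>j\<le>l. mu j))"
      using n1 n2 n3 by (simp only: ennreal_plus add_nonneg_nonneg)
    also have "(\<Sum>k\<le>l. lam k) + \<theta> * (\<Sum>k\<le>l. real (C ! k)) + (\<Sum>j\<le>l. mu j) = rt C"
      unfolding total_rate_def by linarith
    finally show ?thesis .
  qed
  have "Hp acr T F (up C i) u = arr F (up C i) u + abd F (up C i) u + jobs T F (up C i) u"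
    using C by (simp add: Hacr)
  also have "\<dots> \<le> (arr F C u + ennreal (\<Sum>k\<le>l. lam k) * ?c) + (abd F C u + ennreal (\<theta> * (\<Sum>k\<le>l. real (C ! k))) * ?c + ennreal \<theta> * F C u) + (jobs T F C u + ennreal (\<Sum>j\<le>l. mu j) * ?c)"
    by (intro add_mono a b c)
  also have "\<dots> = (arr F C u + abd F C u + jobs T F C u) + (ennreal (\<Sum>k\<le>l. lam k) + ennreal (\<theta> * (\<Sum>k\<le>l. real (C ! k))) + ennreal (\<Sum>j\<le>l. mu j)) * ?c + ennreal \<theta> * F C u"
    by (simp only: distrib_right add.assoc add.commute add.left_commute)
  also have "\<dots> = Hp acr T F C u + ennreal (rt C) * ?c + ennreal \<theta> * F C u"
    using C by (simp add: Hacr r)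
  finally show ?thesis .
qed

lemma Phi_a:
  assumes PA: "PA F" and PB: "PB T F" and C: "length C = Suc l" and j: "1 \<le> j" "j \<le> l"
  shows "Phi acr T F (up C j) t \<le> Phi acr T F (up C 0) t"
  unfolding Phi_def rt_up[OF C j(2)] rt_up[OF C le0]
  using Ha[OF PA PB C j] by (intro nn_integral_mono mult_left_mono) auto

lemma Phi_b:
  assumes PA: "PA F" and PB: "PB T F" and C: "length C = Suc l" and i: "i \<le> l"
    and Fm: "\<And>B. F B \<in> borel_measurable borel" and inc: "\<And>u. F C u \<le> Phi acr T F C u"
  shows "Phi acr T F (up C i) t \<le> Phi acr T F C t + cT T t"
proof -
  let ?r = "rt C"
  let ?H = "Hp acr T F C"
  have Hm[measurable]: "?H \<in> borel_measurable borel" by (rule Hp_meas[OF Fm])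
  have Pm[measurable]: "Phi acr T F C \<in> borel_measurable borel" by (rule Phi_meas[OF Fm])
  have cm[measurable]: "cT T \<in> borel_measurable borel" unfolding cT_def[abs_def] by measurable
  have "Phi acr T F (up C i) t = (\<integral>\<^sup>+\<tau>. ennreal (Ek (?r + \<theta>) \<tau>) * Hp acr T F (up C i) (t + \<tau>) \<partial>lborel)"
    unfolding Phi_def rt_up[OF C i] ..
  also have "\<dots> \<le> (\<integral>\<^sup>+\<tau>. ennreal (Ek (?r + \<theta>) \<tau>) * (?H (t + \<tau>) + ennreal \<theta> * Phi acr T F C (t + \<tau>))
       + ennreal (Ek (?r + \<theta>) \<tau>) * (ennreal ?r * cT T (t + \<tau>)) \<partial>lborel)"
  proof (rule nn_integral_mono)
    fix \<tau> :: real
    have "Hp acr T F (up C i) (t + \<tau>) \<le> ?H (t + \<tau>) + ennreal ?r * cT T (t + \<tau>) + ennreal \<theta> * F C (t + \<tau>)"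
      by (rule Hb[OF PA PB C i])
    also have "\<dots> \<le> ?H (t + \<tau>) + ennreal ?r * cT T (t + \<tau>) + ennreal \<theta> * Phi acr T F C (t + \<tau>)"
      by (intro add_mono order_refl mult_left_mono inc) simp
    finally have "ennreal (Ek (?r + \<theta>) \<tau>) * Hp acr T F (up C i) (t + \<tau>) \<le> ennreal (Ek (?r + \<theta>) \<tau>) * (?H (t + \<tau>) + ennreal ?r * cT T (t + \<tau>) + ennreal \<theta> * Phi acr T F C (t + \<tau>))"
      by (rule mult_left_mono) simp
    also have "\<dots> = ennreal (Ek (?r + \<theta>) \<tau>) * (?H (t + \<tau>) + ennreal \<theta> * Phi acr T F C (t + \<tau>))
       + ennreal (Ek (?r + \<theta>) \<tau>) * (ennreal ?r * cT T (t + \<tau>))"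
      by (simp add: distrib_left add_ac)
    finally show "ennreal (Ek (?r + \<theta>) \<tau>) * Hp acr T F (up C i) (t + \<tau>) \<le> ennreal (Ek (?r + \<theta>) \<tau>) * (?H (t + \<tau>) + ennreal \<theta> * Phi acr T F C (t + \<tau>))
       + ennreal (Ek (?r + \<theta>) \<tau>) * (ennreal ?r * cT T (t + \<tau>))" .
  qed
  also have "\<dots> = (\<integral>\<^sup>+\<tau>. ennreal (Ek (?r + \<theta>) \<tau>) * (?H (t + \<tau>) + ennreal \<theta> * Phi acr T F C (t + \<tau>)) \<partial>lborel)
       + (\<integral>\<^sup>+\<tau>. ennreal (Ek (?r + \<theta>) \<tau>) * (ennreal ?r * cT T (t + \<tau>)) \<partial>lborel)"
    by (rule nn_integral_add) simp_all
  also have "(\<integral>\<^sup>+\<tau>. ennreal (Ek (?r + \<theta>) \<tau>) * (?H (t + \<tau>) + ennreal \<theta> * Phi acr T F C (t + \<tau>)) \<partial>lborel) = Phi acr T F C t"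
    unfolding Phi_def[of acr T F C "t + _"] Phi_def[of acr T F C t]
    by (rule L3[OF rt_pos th_pos Hm])
  also have "(\<integral>\<^sup>+\<tau>. ennreal (Ek (?r + \<theta>) \<tau>) * (ennreal ?r * cT T (t + \<tau>)) \<partial>lborel) \<le> cT T t"
    using rt_pos[of C] th_pos by (intro L4) auto
  finally show ?thesis by (simp add: add_left_mono)
qed

lemma U_meas: "U p T n B \<in> borel_measurable borel"
proof (induction n arbitrary: B)
  case 0 then show ?case by simp
next
  case (Suc n) then show ?case by (simp add: Phi_meas)
qed

lemma U_inc: "length B = Suc l \<Longrightarrow> U acr T n B t \<le> U acr T (Suc n) B t"
proof (induction n arbitrary: B t)
  case 0 then show ?case by simp
next
  case (Suc n)
  show ?case using Suc.IH Suc.prems by (simp only: U.simps) (rule Phi_mono)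
qed

lemma U_PAB: "PA (U acr T n) \<and> PB T (U acr T n)"
proof (induction n)
  case 0 then show ?case by (simp add: PA_def PB_def)
next
  case (Suc n)
  then have PA: "PA (U acr T n)" and PB: "PB T (U acr T n)" by auto
  have "PA (U acr T (Suc n))"
    unfolding PA_def U.simps using Phi_a[OF PA PB] by blast
  moreover have "PB T (U acr T (Suc n))"
    unfolding PB_def U.simps
  proof (intro allI impI)
    fix C :: "nat list" and u :: real and i :: nat assume C: "length C = Suc l" and i: "i \<le> l"
    have inc: "U acr T n C u' \<le> Phi acr T (U acr T n) C u'" for u'
      using U_inc[OF C, of T n u'] by simp
    show "Phi acr T (U acr T n) (up C i) u \<le> Phi acr T (U acr T n) C u + cT T u"
      by (rule Phi_b[OF PA PB C i U_meas inc])
  qed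
  ultimately show ?case ..
qed

lemma U_cmp:
  assumes p: "p \<in> admissible l"
  shows "length A = Suc l \<Longrightarrow> U p T n A t \<le> U acr T n A t"
proof (induction n arbitrary: A t)
  case 0 then show ?case by simp
next
  case (Suc n)
  have "U p T (Suc n) A t = Phi p T (U p T n) A t" by simp
  also have "\<dots> \<le> Phi p T (U acr T n) A t" using Suc by (intro Phi_mono) auto
  also have "\<dots> \<le> Phi acr T (U acr T n) A t"
    unfolding Phi_def using greedy[OF _ _ p Suc.prems] U_PAB[of T n]
    by (intro nn_integral_mono mult_left_mono) auto
  finally show ?case by simp
qed

lemma tp_le:
  assumes p: "p \<in> admissible l" and A0: "length A0 = Suc l"
  shows "throughput l lam mu \<theta> p A0 \<le> throughput l lam mu \<theta> acr A0"
proof -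
  have "expected_matches l lam mu \<theta> p A0 T \<le> expected_matches l lam mu \<theta> acr A0 T" for T
    unfolding expected_matches_U[OF p A0] expected_matches_U[OF acr_adm A0]
    using U_cmp[OF p A0] by (intro SUP_mono) auto
  then show ?thesis
    unfolding throughput_def by (intro Limsup_mono always_eventually allI divide_right_mono_ennreal) auto
qed

end

theorem proposition1:
  fixes l :: nat and lam mu :: "nat \<Rightarrow> real" and \<theta> :: real and A0 :: "nat list"
  assumes "\<And>i. i \<le> l \<Longrightarrow> 0 < lam i"
    and "\<And>j. j \<le> l \<Longrightarrow> 0 < mu j"
    and "0 < \<theta>"
    and "length A0 = Suc l"
  shows "throughput l lam mu \<theta> acr A0 = (SUP \<pi>\<in>admissible l. throughput l lam mu \<theta> \<pi> A0)"
proof -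
  interpret model l lam mu \<theta> using assms(1-3) by unfold_locales
  show ?thesis
  proof (rule antisym)
    show "throughput l lam mu \<theta> acr A0 \<le> (SUP \<pi>\<in>admissible l. throughput l lam mu \<theta> \<pi> A0)"
      by (rule SUP_upper[OF acr_adm])
    show "(SUP \<pi>\<in>admissible l. throughput l lam mu \<theta> \<pi> A0) \<le> throughput l lam mu \<theta> acr A0"
      by (rule SUP_least) (rule tp_le[OF _ assms(4)])
  qed
qed

end
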